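(* Let $\eta>0$, $F(p)=-\eta\sum_{i=1}^N\log p_i$, and $\tilde\Phi(L)=\min_{p\in\Delta_N}\langle L,p\rangle+F(p)$. Then $\tilde\Phi$ is $(2,1/\eta)$-differentially consistent.
   Context: $\Delta_N$ is the probability simplex in $\mathbb{R}^N$. A function $f:\mathbb{R}^N\to\mathbb{R}$ is $(\gamma,\epsilon)$-differentially consistent if it is twice differentiable and $-\nabla^2_{ii}f\le\epsilon(\nabla_if)^\gamma$ for all $i\in[N]$. *)

theory Defs
  imports "HOL-Analysis.Analysis"
begin

text \<open>Vectors in R^N are modelled as real^'n with a finite index type 'n (N = CARD('n)).\<close>

definition prob_simplex :: "(real ^ 'n::finite) set" where
  "prob_simplex = {p. (\<forall>i. 0 \<le> p $ i) \<and> (\<Sum>i\<in>UNIV. p $ i) = 1}"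

definition logbarrier :: "real \<Rightarrow> real ^ 'n::finite \<Rightarrow> real" where
  "logbarrier \<eta> p = - \<eta> * (\<Sum>i\<in>UNIV. ln (p $ i))"

text \<open>Phi~(L) = min over the prob_simplex of <L,p> + F(p). Since F = +infinity whenever some
  p_i = 0, this is the infimum over prob_simplex points with all coordinates positive.\<close>
definition Phi_tilde :: "real \<Rightarrow> real ^ 'n::finite \<Rightarrow> real" where
  "Phi_tilde \<eta> L = (INF p \<in> {p \<in> prob_simplex. \<forall>i. 0 < p $ i}. L \<bullet> p + logbarrier \<eta> p)"

definition partial :: "(real ^ 'n::finite \<Rightarrow> real) \<Rightarrow> 'n \<Rightarrow> real ^ 'n \<Rightarrow> real" where
  "partial f i x = deriv (\<lambda>t. f (x + t *\<^sub>R axis i 1)) 0"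

definition grad :: "(real ^ 'n::finite \<Rightarrow> real) \<Rightarrow> real ^ 'n \<Rightarrow> real ^ 'n" where
  "grad f x = (\<chi> i. partial f i x)"

definition twice_differentiable :: "(real ^ 'n::finite \<Rightarrow> real) \<Rightarrow> bool" where
  "twice_differentiable f \<longleftrightarrow>
     (\<forall>x. f differentiable (at x)) \<and> (\<forall>x. grad f differentiable (at x))"

definition diff_consistent :: "real \<Rightarrow> real \<Rightarrow> (real ^ 'n::finite \<Rightarrow> real) \<Rightarrow> bool" where
  "diff_consistent \<gamma> \<epsilon> f \<longleftrightarrow> twice_differentiable f \<and>
     (\<forall>x i. - partial (partial f i) i x \<le> \<epsilon> * (partial f i x) powr \<gamma>)"

end

theory Submission
  imports Defs
begin

definition hsum :: "real \<Rightarrow> real ^ 'n::finite \<Rightarrow> real \<Rightarrow> real" where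
  "hsum \<eta> L \<mu> = (\<Sum>i\<in>UNIV. \<eta> / (L $ i + \<mu>))"

definition ginv :: "real \<Rightarrow> real ^ 'n::finite \<Rightarrow> real \<Rightarrow> real" where
  "ginv \<eta> L s = (THE \<mu>. (\<forall>i. 0 < L $ i + \<mu>) \<and> hsum \<eta> L \<mu> = s)"

definition lam :: "real \<Rightarrow> real ^ 'n::finite \<Rightarrow> real" where
  "lam \<eta> L = ginv \<eta> L 1"

definition pv :: "real \<Rightarrow> real ^ 'n::finite \<Rightarrow> real ^ 'n" where
  "pv \<eta> L = (\<chi> i. \<eta> / (L $ i + lam \<eta> L))"

lemma hsum_strict_mono:
  assumes "\<eta> > 0" "\<forall>i. 0 < (L::real^'n::finite) $ i + a" "a < b"
  shows "hsum \<eta> L b < hsum \<eta> L a"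
  unfolding hsum_def
proof (rule sum_strict_mono)
  fix i :: 'n
  have "0 < L $ i + a" using assms by auto
  moreover have "0 < L $ i + b" using assms calculation by linarith
  ultimately show "\<eta> / (L $ i + b) < \<eta> / (L $ i + a)"
    using assms by (intro divide_strict_left_mono) (auto intro!: mult_pos_pos)
qed auto

lemma hsum_unique:
  assumes "\<eta> > 0" "\<forall>i. 0 < (L::real^'n::finite) $ i + a" "\<forall>i. 0 < L $ i + b"
    "hsum \<eta> L a = hsum \<eta> L b"
  shows "a = b"
  using hsum_strict_mono[OF assms(1,2), of b] hsum_strict_mono[OF assms(1,3), of a] assms(4)
  by (cases a b rule: linorder_cases) auto

lemma hsum_exists:
  assumes "\<eta> > 0"
  shows "\<exists>\<mu>. (\<forall>i. 0 < (L::real^'n::finite) $ i + \<mu>) \<and> hsum \<eta> L \<mu> = 1"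
proof -
  define m where "m = Min (range (\<lambda>i. L $ i))"
  have mle: "m \<le> L $ i" for i unfolding m_def by (rule Min_le) auto
  have "m \<in> range (\<lambda>i. L $ i)" unfolding m_def by (rule Min_in) auto
  then obtain k where k: "L $ k = m" by auto
  define N where "N = real CARD('n)"
  have N1: "N \<ge> 1" unfolding N_def by (simp add: Suc_leI)
  define a where "a = \<eta> - m"
  define b where "b = \<eta> * N - m"
  have ab: "a \<le> b" unfolding a_def b_def using N1 assms by simp
  have pos: "0 < L $ i + x" if "a \<le> x" for i x
    using mle[of i] that assms unfolding a_def by linarith
  have cont: "continuous_on {a..b} (hsum \<eta> L)"
    unfolding hsum_def
    by (intro continuous_intros) (metis atLeastAtMost_iff pos less_irrefl)
  have ha: "1 \<le> hsum \<eta> L a"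
  proof -
    have "1 = \<eta> / (L $ k + a)" using k assms unfolding a_def by simp
    also have "\<dots> \<le> hsum \<eta> L a" unfolding hsum_def
      by (rule member_le_sum) (use pos assms in \<open>auto intro!: divide_nonneg_pos less_imp_le\<close>)
    finally show ?thesis .
  qed
  have hb: "hsum \<eta> L b \<le> 1"
  proof -
    have "hsum \<eta> L b \<le> (\<Sum>i\<in>(UNIV::'n set). 1 / N)" unfolding hsum_def
    proof (rule sum_mono)
      fix i :: 'n
      have "\<eta> * N \<le> L $ i + b" using mle[of i] unfolding b_def by simp
      moreover have "0 < \<eta> * N" using assms N1 by simp
      ultimately have "\<eta> / (L $ i + b) \<le> \<eta> / (\<eta> * N)"
        using assms by (intro divide_left_mono) auto
      also have "\<dots> = 1 / N" using assms by simp
      finally show "\<eta> / (L $ i + b) \<le> 1 / N" .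
    qed
    also have "\<dots> = 1" using N1 unfolding N_def by simp
    finally show ?thesis .
  qed
  obtain x where "x \<in> {a..b}" "hsum \<eta> L x = 1"
    using IVT2'[of "hsum \<eta> L" b 1 a, OF hb ha ab cont] by auto
  then show ?thesis using pos by auto
qed

lemma ginv_props:
  assumes "\<eta> > 0" "\<forall>i. 0 < (L::real^'n::finite) $ i + \<mu>" "hsum \<eta> L \<mu> = s"
  shows "ginv \<eta> L s = \<mu>"
  unfolding ginv_def
  by (rule the_equality) (use assms hsum_unique[OF assms(1)] in auto)

lemma lam_props:
  assumes "\<eta> > 0"
  shows "0 < (L::real^'n::finite) $ i + lam \<eta> L" "hsum \<eta> L (lam \<eta> L) = 1"
proof -
  obtain \<mu> where "\<forall>i. 0 < L $ i + \<mu>" "hsum \<eta> L \<mu> = 1" using hsum_exists[OF assms] by blast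
  moreover have "lam \<eta> L = \<mu>" unfolding lam_def by (rule ginv_props) (use assms calculation in auto)
  ultimately show "0 < L $ i + lam \<eta> L" "hsum \<eta> L (lam \<eta> L) = 1" by auto
qed

lemma pv_pos: "\<eta> > 0 \<Longrightarrow> 0 < pv \<eta> L $ i"
  unfolding pv_def using lam_props(1)[of \<eta> L i] by simp

lemma pv_sum: "\<eta> > 0 \<Longrightarrow> (\<Sum>i\<in>UNIV. pv \<eta> L $ i) = 1"
  unfolding pv_def using lam_props(2)[of \<eta> L] by (simp add: hsum_def)

definition Phi0 :: "real \<Rightarrow> real ^ 'n::finite \<Rightarrow> real" where
  "Phi0 \<eta> L = L \<bullet> pv \<eta> L + logbarrier \<eta> (pv \<eta> L)"

lemma Phi0_min:
  assumes "\<eta> > 0" "p \<in> prob_simplex" "\<forall>i. 0 < p $ i"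
  shows "Phi0 \<eta> L \<le> L \<bullet> p + logbarrier \<eta> p"
proof -
  define q where "q = pv \<eta> L"
  define c where "c = lam \<eta> L"
  have cpos: "0 < L $ i + c" for i using lam_props(1)[OF assms(1)] unfolding c_def by auto
  have q: "q $ i = \<eta> / (L $ i + c)" for i unfolding q_def pv_def c_def by simp
  have ps: "(\<Sum>i\<in>UNIV. p $ i) = 1" using assms(2) unfolding prob_simplex_def by auto
  have qs: "(\<Sum>i\<in>UNIV. q $ i) = 1" using pv_sum[OF assms(1), of L] unfolding q_def by simp
  have key: "L $ i * q $ i - \<eta> * ln (q $ i) \<le> L $ i * p $ i - \<eta> * ln (p $ i) + c * p $ i - c * q $ i" for i
  proof -
    have qp: "0 < q $ i" using q cpos assms(1) by simp
    have "ln (p $ i / q $ i) \<le> p $ i / q $ i - 1" using ln_le_minus_one[of "p $ i / q $ i"] assms(3) qp by simp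
    moreover have "ln (p $ i / q $ i) = ln (p $ i) - ln (q $ i)" using assms(3)[rule_format, of i] qp ln_div[of "p $ i" "q $ i"] by simp
    moreover have "p $ i / q $ i = p $ i * (L $ i + c) / \<eta>" using q assms(1) cpos[of i] by simp
    ultimately have "\<eta> * (ln (p $ i) - ln (q $ i)) \<le> \<eta> * (p $ i * (L $ i + c) / \<eta> - 1)"
      using assms(1) by (intro mult_left_mono) auto
    also have "\<dots> = p $ i * L $ i + p $ i * c - \<eta>" using assms(1) by (simp add: field_simps)
    finally have h1: "\<eta> * ln (p $ i) - \<eta> * ln (q $ i) \<le> p $ i * L $ i + p $ i * c - \<eta>"
      by (simp add: algebra_simps)
    have h2: "\<eta> = q $ i * L $ i + q $ i * c"
    proof -
      have "q $ i * L $ i + q $ i * c = q $ i * (L $ i + c)" by (simp add: algebra_simps)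
      also have "\<dots> = \<eta>" using q[of i] cpos[of i] by simp
      finally show ?thesis by simp
    qed
    show ?thesis using h1 h2 by (simp add: algebra_simps)
  qed
  have "(\<Sum>i\<in>UNIV. L $ i * q $ i - \<eta> * ln (q $ i)) \<le> (\<Sum>i\<in>UNIV. L $ i * p $ i - \<eta> * ln (p $ i) + c * p $ i - c * q $ i)"
    by (rule sum_mono) (rule key)
  also have "\<dots> = (\<Sum>i\<in>UNIV. L $ i * p $ i - \<eta> * ln (p $ i)) + c * (\<Sum>i\<in>UNIV. p $ i) - c * (\<Sum>i\<in>UNIV. q $ i)"
    by (simp add: sum.distrib sum_subtractf sum_distrib_left)
  finally have "(\<Sum>i\<in>UNIV. L $ i * q $ i - \<eta> * ln (q $ i)) \<le> (\<Sum>i\<in>UNIV. L $ i * p $ i - \<eta> * ln (p $ i))"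
    using ps qs by simp
  then show ?thesis unfolding Phi0_def logbarrier_def inner_vec_def q_def[symmetric]
    by (simp add: sum_subtractf sum_distrib_left sum_negf)
qed

lemma Phi_eq: "\<eta> > 0 \<Longrightarrow> Phi_tilde \<eta> L = Phi0 \<eta> (L::real^'n::finite)"
  unfolding Phi_tilde_def
proof (rule antisym)
  assume "\<eta> > 0"
  have mem: "pv \<eta> L \<in> {p \<in> prob_simplex. \<forall>i. 0 < p $ i}"
    using pv_pos[OF \<open>\<eta>>0\<close>] pv_sum[OF \<open>\<eta>>0\<close>] unfolding prob_simplex_def by (auto intro: less_imp_le)
  show "(INF p\<in>{p \<in> prob_simplex. \<forall>i. 0 < p $ i}. L \<bullet> p + logbarrier \<eta> p) \<le> Phi0 \<eta> L"
    unfolding Phi0_def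
    by (rule cINF_lower[OF _ mem]) (auto intro!: bdd_belowI2 Phi0_min[OF \<open>\<eta>>0\<close>])
  show "Phi0 \<eta> L \<le> (INF p\<in>{p \<in> prob_simplex. \<forall>i. 0 < p $ i}. L \<bullet> p + logbarrier \<eta> p)"
    by (rule cINF_greatest) (use mem Phi0_min[OF \<open>\<eta>>0\<close>] in auto)
qed


lemma bl_fst_nth: "bounded_linear (\<lambda>h::(real^'n::finite) \<times> real. fst h $ i)"
  using bounded_linear_compose[OF bounded_linear_vec_nth[of i] bounded_linear_fst] by (simp add: o_def)

lemma fst_nth_deriv[derivative_intros]:
  "((\<lambda>x::(real^'n::finite) \<times> real. fst x $ i) has_derivative (\<lambda>h. fst h $ i)) F"
  by (rule bounded_linear.has_derivative[OF bl_fst_nth has_derivative_ident])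

lemma term_deriv:
  assumes "0 < fst x $ i + snd x"
  shows "((\<lambda>x::(real^'n::finite) \<times> real. \<eta> / (fst x $ i + snd x)) has_derivative
     (\<lambda>h. - (\<eta> / (fst x $ i + snd x)^2 * (fst h $ i + snd h)))) (at x)"
  using assms
  by (auto intro!: derivative_eq_intros ext simp: power2_eq_square field_simps)
     (simp add: diff_divide_distrib add_divide_distrib)

definition aa :: "real \<Rightarrow> real^'n::finite \<Rightarrow> real \<Rightarrow> 'n \<Rightarrow> real" where
  "aa \<eta> L \<mu> i = \<eta> / (L $ i + \<mu>)^2"

definition AA :: "real \<Rightarrow> real^'n::finite \<Rightarrow> real \<Rightarrow> real" where
  "AA \<eta> L \<mu> = (\<Sum>i\<in>UNIV. aa \<eta> L \<mu> i)"

definition Gm :: "real \<Rightarrow> (real^'n::finite) \<times> real \<Rightarrow> (real^'n) \<times> real" where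
  "Gm \<eta> x = (fst x, hsum \<eta> (fst x) (snd x))"

definition Gi :: "real \<Rightarrow> (real^'n::finite) \<times> real \<Rightarrow> (real^'n) \<times> real" where
  "Gi \<eta> y = (fst y, ginv \<eta> (fst y) (snd y))"

definition Sset :: "((real^'n::finite) \<times> real) set" where
  "Sset = {x. \<forall>i. 0 < fst x $ i + snd x}"

lemma AA_pos:
  assumes "\<eta> > 0" "\<forall>i. 0 < (L::real^'n::finite) $ i + \<mu>"
  shows "0 < AA \<eta> L \<mu>"
  unfolding AA_def aa_def
proof (rule sum_pos)
  fix i :: 'n
  show "0 < \<eta> / (L $ i + \<mu>)\<^sup>2" using assms(1) assms(2)[rule_format, of i] by simp
qed auto

lemma open_Sset: "open (Sset :: ((real^'n::finite) \<times> real) set)"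
proof -
  have "Sset = (\<Inter>i\<in>UNIV. {x::(real^'n) \<times> real. 0 < fst x $ i + snd x})"
    unfolding Sset_def by auto
  moreover have op: "open {x::(real^'n) \<times> real. 0 < fst x $ i + snd x}" for i
  proof (rule open_Collect_less)
    show "continuous_on UNIV (\<lambda>x::(real^'n) \<times> real. fst x $ i + snd x)"
      by (intro continuous_on_add linear_continuous_on bl_fst_nth bounded_linear_snd)
  qed simp
  moreover have "open (\<Inter>i\<in>UNIV. {x::(real^'n) \<times> real. 0 < fst x $ i + snd x})"
    by (rule open_INT) (use op in auto)
  ultimately show ?thesis by simp
qed

lemma Gm_deriv:
  fixes x :: "(real^'n::finite) \<times> real"
  assumes "x \<in> Sset"
  shows "(Gm \<eta> has_derivative
     (\<lambda>h. (fst h, - (\<Sum>i\<in>UNIV. aa \<eta> (fst x) (snd x) i * (fst h $ i + snd h))))) (at x)"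
proof -
  have "((\<lambda>x::(real^'n) \<times> real. \<Sum>i\<in>UNIV. \<eta> / (fst x $ i + snd x)) has_derivative
     (\<lambda>h::(real^'n) \<times> real. \<Sum>i\<in>UNIV. - (\<eta> / (fst x $ i + snd x)^2 * (fst h $ i + snd h)))) (at x)"
    by (rule has_derivative_sum) (rule term_deriv, use assms in \<open>auto simp: Sset_def\<close>)
  then show ?thesis
    unfolding Gm_def hsum_def
    by (auto intro!: has_derivative_Pair has_derivative_fst[OF has_derivative_ident]
        simp: sum_negf aa_def)
qed

lemma Gi_Gm: "\<eta> > 0 \<Longrightarrow> x \<in> Sset \<Longrightarrow> Gi \<eta> (Gm \<eta> x) = x"
  unfolding Gi_def Gm_def Sset_def
  by (auto intro!: ginv_props prod_eqI)

lemma Gi_deriv: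
  fixes x :: "(real^'n::finite) \<times> real"
  assumes eta: "\<eta> > 0" and x: "x \<in> Sset"
  shows "(Gi \<eta> has_derivative
     (\<lambda>k. (fst k, - (snd k + (\<Sum>i\<in>UNIV. aa \<eta> (fst x) (snd x) i * fst k $ i)) / AA \<eta> (fst x) (snd x))))
     (at (Gm \<eta> x))"
proof (rule has_derivative_inverse_strong[OF open_Sset x])
  show "continuous_on Sset (Gm \<eta>)"
    using Gm_deriv by (meson continuous_at_imp_continuous_on has_derivative_continuous)
  show "\<And>x. x \<in> Sset \<Longrightarrow> Gi \<eta> (Gm \<eta> x) = x" using Gi_Gm eta by blast
  show "(Gm \<eta> has_derivative
     (\<lambda>h. (fst h, - (\<Sum>i\<in>UNIV. aa \<eta> (fst x) (snd x) i * (fst h $ i + snd h))))) (at x)"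
    by (rule Gm_deriv[OF x])
  have A: "AA \<eta> (fst x) (snd x) \<noteq> 0" using AA_pos[OF eta, of "fst x" "snd x"] x
    unfolding Sset_def by auto
  show "(\<lambda>h. (fst h, - (\<Sum>i\<in>UNIV. aa \<eta> (fst x) (snd x) i * (fst h $ i + snd h)))) \<circ>
    (\<lambda>k. (fst k, - (snd k + (\<Sum>i\<in>UNIV. aa \<eta> (fst x) (snd x) i * fst k $ i)) / AA \<eta> (fst x) (snd x))) = id"
  proof (rule ext)
    fix k :: "(real^'n) \<times> real"
    define A where "A = AA \<eta> (fst x) (snd x)"
    define c where "c = - (snd k + (\<Sum>i\<in>UNIV. aa \<eta> (fst x) (snd x) i * fst k $ i)) / A"
    have "(\<Sum>i\<in>UNIV. aa \<eta> (fst x) (snd x) i * (fst k $ i + c)) =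
        (\<Sum>i\<in>UNIV. aa \<eta> (fst x) (snd x) i * fst k $ i) + c * A"
      unfolding A_def AA_def by (simp add: algebra_simps sum.distrib sum_distrib_left)
    also have "\<dots> = - snd k" unfolding c_def using A A_def by simp
    finally show "((\<lambda>h. (fst h, - (\<Sum>i\<in>UNIV. aa \<eta> (fst x) (snd x) i * (fst h $ i + snd h)))) \<circ>
    (\<lambda>k. (fst k, - (snd k + (\<Sum>i\<in>UNIV. aa \<eta> (fst x) (snd x) i * fst k $ i)) / AA \<eta> (fst x) (snd x)))) k = id k"
      unfolding c_def A_def by (simp add: prod_eq_iff)
  qed
qed

lemma lam_deriv:
  assumes eta: "\<eta> > 0"
  shows "(lam \<eta> has_derivative
     (\<lambda>h. - (\<Sum>i\<in>UNIV. aa \<eta> L (lam \<eta> L) i * h $ i) / AA \<eta> L (lam \<eta> L))) (at (L::real^'n::finite))"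
proof -
  define x where "x = (L, lam \<eta> L)"
  have x: "x \<in> Sset" unfolding x_def Sset_def using lam_props(1)[OF eta] by auto
  have Gx: "Gm \<eta> x = (L, 1)" unfolding x_def Gm_def using lam_props(2)[OF eta] by simp
  have eq: "lam \<eta> = (\<lambda>L'. snd (Gi \<eta> (L', 1)))" unfolding lam_def Gi_def by auto
  have d1: "((\<lambda>L'::real^'n. (L', 1::real)) has_derivative (\<lambda>h. (h, 0))) (at L)"
    by (auto intro!: derivative_eq_intros)
  have d2: "(Gi \<eta> has_derivative
     (\<lambda>k. (fst k, - (snd k + (\<Sum>i\<in>UNIV. aa \<eta> (fst x) (snd x) i * fst k $ i)) / AA \<eta> (fst x) (snd x))))
     (at (L, 1))" using Gi_deriv[OF eta x] Gx by simp
  have "((\<lambda>L'. Gi \<eta> (L', 1)) has_derivative (\<lambda>h. (h, - (0 + (\<Sum>i\<in>UNIV. aa \<eta> L (lam \<eta> L) i * h $ i)) / AA \<eta> L (lam \<eta> L)))) (at L)"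
    using has_derivative_compose[OF d1 d2] unfolding x_def by simp
  from has_derivative_snd[OF this] show ?thesis unfolding eq by simp
qed


lemma partial_from_deriv:
  fixes f :: "real^'n::finite \<Rightarrow> real"
  assumes "(f has_derivative f') (at x)"
  shows "partial f i x = f' (axis i 1)"
proof -
  interpret bl: bounded_linear f' using assms by (rule has_derivative_bounded_linear)
  have d1: "((\<lambda>t::real. x + t *\<^sub>R axis i 1) has_derivative (\<lambda>t. t *\<^sub>R axis i 1)) (at 0)"
    by (auto intro!: derivative_eq_intros)
  have d2: "(f has_derivative f') (at (x + 0 *\<^sub>R axis i (1::real)))" using assms by simp
  have "((\<lambda>t. f (x + t *\<^sub>R axis i 1)) has_derivative (\<lambda>t. f' (t *\<^sub>R axis i 1))) (at 0)"
    using has_derivative_compose[OF d1 d2] .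
  moreover have "(\<lambda>t. f' (t *\<^sub>R axis i 1)) = (*) (f' (axis i 1))"
    by (auto simp: bl.scaleR)
  ultimately have "((\<lambda>t. f (x + t *\<^sub>R axis i 1)) has_field_derivative f' (axis i 1)) (at 0)"
    unfolding has_field_derivative_def by simp
  then show ?thesis unfolding partial_def by (rule DERIV_imp_deriv)
qed

lemma nth_deriv[derivative_intros]:
  "((\<lambda>x::real^'n::finite. x $ i) has_derivative (\<lambda>h. h $ i)) F"
  by (rule bounded_linear.has_derivative[OF bounded_linear_vec_nth has_derivative_ident])

definition dlam :: "real \<Rightarrow> real^'n::finite \<Rightarrow> real^'n \<Rightarrow> real" where
  "dlam \<eta> L h = - (\<Sum>i\<in>UNIV. aa \<eta> L (lam \<eta> L) i * h $ i) / AA \<eta> L (lam \<eta> L)"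

lemma pv_comp_deriv:
  assumes eta: "\<eta> > 0"
  shows "((\<lambda>L. pv \<eta> L $ i) has_derivative
     (\<lambda>h. - (aa \<eta> L (lam \<eta> L) i * (h $ i + dlam \<eta> L h)))) (at (L::real^'n::finite))"
proof -
  have ld: "(lam \<eta> has_derivative dlam \<eta> L) (at L)"
    using lam_deriv[OF eta, of L] unfolding dlam_def[abs_def] by simp
  have nz: "L $ i + lam \<eta> L \<noteq> 0" using lam_props(1)[OF eta, of L i] by simp
  show ?thesis unfolding pv_def
    using nz
    by (auto intro!: derivative_eq_intros ld ext simp: aa_def power2_eq_square field_simps)
       (simp add: diff_divide_distrib add_divide_distrib)
qed

lemma pv_deriv:
  assumes eta: "\<eta> > 0"
  shows "(pv \<eta> has_derivative
     (\<lambda>h. \<chi> i. - (aa \<eta> L (lam \<eta> L) i * (h $ i + dlam \<eta> L h)))) (at (L::real^'n::finite))"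
  apply (subst has_derivative_componentwise_within)
  using pv_comp_deriv[OF eta]
  by (auto simp: Basis_vec_def inner_axis)


lemma pv_mem: "\<eta> > 0 \<Longrightarrow> pv \<eta> L \<in> prob_simplex" "\<eta> > 0 \<Longrightarrow> \<forall>i. 0 < pv \<eta> L $ i"
  using pv_pos[of \<eta> L] pv_sum[of \<eta> L] unfolding prob_simplex_def by (auto intro: less_imp_le)

lemma Phi0_deriv:
  assumes eta: "\<eta> > 0"
  shows "(Phi0 \<eta> has_derivative (\<lambda>h. h \<bullet> pv \<eta> L)) (at (L::real^'n::finite))"
  unfolding has_derivative_at_alt
proof (intro conjI allI impI)
  show "bounded_linear (\<lambda>h. h \<bullet> pv \<eta> L)" by (rule bounded_linear_inner_left)
  fix e :: real assume e: "0 < e"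
  have "isCont (pv \<eta>) L"
    using pv_deriv[OF eta, of L] by (rule has_derivative_continuous)
  then obtain d where d: "d > 0" "\<And>y. dist y L < d \<Longrightarrow> dist (pv \<eta> y) (pv \<eta> L) < e"
    using e unfolding continuous_at_eps_delta by blast
  show "\<exists>d>0. \<forall>y. norm (y - L) < d \<longrightarrow>
      norm (Phi0 \<eta> y - Phi0 \<eta> L - (y - L) \<bullet> pv \<eta> L) \<le> e * norm (y - L)"
  proof (intro exI[of _ d] conjI allI impI)
    show "d > 0" by fact
    fix y assume y: "norm (y - L) < d"
    have u: "Phi0 \<eta> y \<le> y \<bullet> pv \<eta> L + logbarrier \<eta> (pv \<eta> L)"
      by (rule Phi0_min[OF eta pv_mem[OF eta]])
    have l: "Phi0 \<eta> L \<le> L \<bullet> pv \<eta> y + logbarrier \<eta> (pv \<eta> y)"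
      by (rule Phi0_min[OF eta pv_mem[OF eta]])
    define D where "D = Phi0 \<eta> y - Phi0 \<eta> L - (y - L) \<bullet> pv \<eta> L"
    have D1: "D \<le> 0" using u unfolding D_def Phi0_def by (simp add: inner_diff_left)
    have D2: "(y - L) \<bullet> (pv \<eta> y - pv \<eta> L) \<le> D" using l unfolding D_def Phi0_def
      by (simp add: inner_diff_left inner_diff_right)
    have "\<bar>D\<bar> \<le> \<bar>(y - L) \<bullet> (pv \<eta> y - pv \<eta> L)\<bar>" using D1 D2 by linarith
    also have "\<dots> \<le> norm (y - L) * norm (pv \<eta> y - pv \<eta> L)" by (rule Cauchy_Schwarz_ineq2)
    also have "\<dots> \<le> norm (y - L) * e"
      using d(2)[of y] y by (intro mult_left_mono) (auto simp: dist_norm)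
    finally show "norm (Phi0 \<eta> y - Phi0 \<eta> L - (y - L) \<bullet> pv \<eta> L) \<le> e * norm (y - L)"
      unfolding D_def by (simp add: mult.commute)
  qed
qed

theorem lemma8:
  fixes \<eta> :: real
  assumes "\<eta> > 0"
  shows "diff_consistent 2 (1 / \<eta>) (Phi_tilde \<eta> :: real ^ 'n::finite \<Rightarrow> real)"
proof -
  have PE: "(Phi_tilde \<eta> :: real ^ 'n::finite \<Rightarrow> real) = Phi0 \<eta>"
    by (intro ext) (rule Phi_eq[OF assms])
  have P1: "partial (Phi0 \<eta>) i = (\<lambda>L::real^'n. pv \<eta> L $ i)" for i
    by (intro ext, subst partial_from_deriv[OF Phi0_deriv[OF assms]]) (simp add: inner_axis')
  have G: "grad (Phi0 \<eta>) = (pv \<eta> :: real^'n \<Rightarrow> real^'n)"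
    unfolding grad_def P1 by (intro ext) (simp add: vec_eq_iff)
  have td: "twice_differentiable (Phi0 \<eta> :: real^'n \<Rightarrow> real)"
    unfolding twice_differentiable_def G
    using Phi0_deriv[OF assms] pv_deriv[OF assms] by (auto simp: differentiable_def)
  have ineq: "- partial (partial (Phi0 \<eta>) i) i L \<le> 1 / \<eta> * partial (Phi0 \<eta>) i L powr 2"
    for i and L :: "real^'n"
  proof -
    define a where "a = aa \<eta> L (lam \<eta> L) i"
    define A where "A = AA \<eta> L (lam \<eta> L)"
    have Apos: "0 < A" unfolding A_def using AA_pos[OF assms] lam_props(1)[OF assms] by blast
    have apos: "0 \<le> a" unfolding a_def aa_def using assms by simp
    have sa: "(\<Sum>j\<in>UNIV. aa \<eta> L (lam \<eta> L) j * axis i 1 $ j) = a"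
      unfolding a_def axis_def by (simp add: if_distrib cong: if_cong)
    have "partial (partial (Phi0 \<eta>) i) i L = - (a * (1 - a / A))"
      unfolding P1 partial_from_deriv[OF pv_comp_deriv[OF assms]]
      by (simp add: dlam_def sa a_def A_def)
    then have "- partial (partial (Phi0 \<eta>) i) i L = a - a * a / A" by (simp add: algebra_simps)
    also have "\<dots> \<le> a" using Apos apos by simp
    also have "a = 1 / \<eta> * (pv \<eta> L $ i) ^ 2"
      unfolding a_def aa_def pv_def using assms by (simp add: power2_eq_square)
    also have "\<dots> = 1 / \<eta> * partial (Phi0 \<eta>) i L powr 2"
      unfolding P1 using pv_pos[OF assms, of L i] by (simp add: powr_numeral)
    finally show ?thesis .
  qed
  show ?thesis unfolding diff_consistent_def PE using td ineq by blast
qed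

end
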